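(* Let $d$ be a nonnegative integer and let $H$ be a multigraph of even order with $\phi(H) \le d+1$, and let $r$ be the number of vertices of degree $d+1$ in $H$. Let $S \subsetneq V(H)$ with $|S|$ odd, $|S|\ge 3$, such that $\langle S\rangle$ is $(d+1)$-full in $H$, i.e. $t(\langle S\rangle)=d+1$. Then $\Delta(H_S)\le d+1$, $\Gamma(H_S)\le d+1$, and $H_S$ has at most $r$ vertices of degree $d+1$. Also $\Delta(H_{S^c})\le d+1$ and $\Gamma(H_{S^c})\le d+1$, and if $H_{S^c}$ has more than $r$ vertices of degree $d+1$, then it has exactly $r+1$ vertices, each of degree $d+1$. Here $S^c=V(H)\setminus S$.
   Context: Multigraphs are finite and loopless, multiple edges allowed. For $S \subseteq V(H)$, $\langle S\rangle$ is the induced subgraph. For a multigraph $K$ of odd order $n(K)\ge 3$ with $e(K)$ edges, $t(K) = 2e(K)/(n(K)-1)$. $\Gamma(H) = \max\{t(\langle R\rangle) : R\subseteq V(H), |R| \text{ odd}, |R|\ge 3\}$ (statements about $\Gamma$ of a multigraph with no such $R$ are vacuous); $\phi(H) = \lceil \max\{\Delta(H),\Gamma(H)\}\rceil$. Shrinking: for a nonempty proper subset $S$ of $V(H)$, $H_S$ has vertex set $(V(H)\setminus S)\cup\{s\}$ for a new vertex $s$; its edges are the edges of $H - S$ together with, for each $u \notin S$, exactly as many edges $us$ as there are edges of $H$ joining $u$ to vertices of $S$. *)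

theory Defs
  imports Complex_Main
begin

text \<open>A finite loopless multigraph on vertex set V, given by an edge-multiplicity
  function m (m u v = number of edges joining u and v).\<close>
definition multigraph :: "'a set \<Rightarrow> ('a \<Rightarrow> 'a \<Rightarrow> nat) \<Rightarrow> bool" where
  "multigraph V m \<longleftrightarrow> finite V \<and> (\<forall>u v. m u v = m v u) \<and> (\<forall>u. m u u = 0)
     \<and> (\<forall>u v. 0 < m u v \<longrightarrow> u \<in> V \<and> v \<in> V)"

definition deg :: "'a set \<Rightarrow> ('a \<Rightarrow> 'a \<Rightarrow> nat) \<Rightarrow> 'a \<Rightarrow> nat" where
  "deg V m v = (\<Sum>u\<in>V. m v u)"

definition maxdeg :: "'a set \<Rightarrow> ('a \<Rightarrow> 'a \<Rightarrow> nat) \<Rightarrow> nat" where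
  "maxdeg V m = Max (deg V m ` V)"

definition edges_in :: "('a \<Rightarrow> 'a \<Rightarrow> nat) \<Rightarrow> 'a set \<Rightarrow> nat" where
  "edges_in m R = (\<Sum>u\<in>R. \<Sum>v\<in>R. m u v) div 2"

definition tval :: "('a \<Rightarrow> 'a \<Rightarrow> nat) \<Rightarrow> 'a set \<Rightarrow> real" where
  "tval m R = 2 * real (edges_in m R) / (real (card R) - 1)"

text \<open>Gamma; when there is no odd R with |R| >= 3 we take the value 0, so that
  bounds of the form Gamma <= c with c >= 0 hold vacuously.\<close>
definition Gamma :: "'a set \<Rightarrow> ('a \<Rightarrow> 'a \<Rightarrow> nat) \<Rightarrow> real" where
  "Gamma V m = Max (insert 0 {tval m R | R. R \<subseteq> V \<and> odd (card R) \<and> 3 \<le> card R})"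

definition phi :: "'a set \<Rightarrow> ('a \<Rightarrow> 'a \<Rightarrow> nat) \<Rightarrow> int" where
  "phi V m = \<lceil>max (real (maxdeg V m)) (Gamma V m)\<rceil>"

text \<open>Shrinking S to a new vertex: the new vertex is None, old vertices are Some v.\<close>
definition shrink_V :: "'a set \<Rightarrow> 'a set \<Rightarrow> 'a option set" where
  "shrink_V V S = Some ` (V - S) \<union> {None}"

fun shrink_m :: "'a set \<Rightarrow> ('a \<Rightarrow> 'a \<Rightarrow> nat) \<Rightarrow> 'a set \<Rightarrow> 'a option \<Rightarrow> 'a option \<Rightarrow> nat" where
  "shrink_m V m S (Some u) (Some v) = (if u \<in> V - S \<and> v \<in> V - S then m u v else 0)"
| "shrink_m V m S (Some u) None = (if u \<in> V - S then (\<Sum>w\<in>S. m u w) else 0)"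
| "shrink_m V m S None (Some v) = (if v \<in> V - S then (\<Sum>w\<in>S. m v w) else 0)"
| "shrink_m V m S None None = 0"

definition num_deg :: "'a set \<Rightarrow> ('a \<Rightarrow> 'a \<Rightarrow> nat) \<Rightarrow> nat \<Rightarrow> nat" where
  "num_deg V m k = card {v \<in> V. deg V m v = k}"

end

theory Submission
  imports Defs
begin

definition cr :: "('a \<Rightarrow> 'a \<Rightarrow> nat) \<Rightarrow> 'a set \<Rightarrow> 'a set \<Rightarrow> nat" where
  "cr m A B = (\<Sum>u\<in>A. \<Sum>v\<in>B. m u v)"

lemma cr_Un_left: "finite A \<Longrightarrow> finite B \<Longrightarrow> A \<inter> B = {} \<Longrightarrow> cr m (A \<union> B) C = cr m A C + cr m B C"
  by (simp add: cr_def sum.union_disjoint)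

lemma cr_Un_right: "finite B \<Longrightarrow> finite C \<Longrightarrow> B \<inter> C = {} \<Longrightarrow> cr m A (B \<union> C) = cr m A B + cr m A C"
  by (simp add: cr_def sum.union_disjoint sum.distrib)

lemma cr_swap: "\<forall>u v. m u v = m v u \<Longrightarrow> cr m A B = cr m B A"
  unfolding cr_def by (subst sum.swap) simp

lemma cr_even: assumes "finite R" "\<forall>u v. m u v = m v u" "\<forall>u. m u u = 0" shows "even (cr m R R)"
  using assms(1)
proof (induction R rule: finite_induct)
  case empty then show ?case by (simp add: cr_def)
next
  case (insert a R)
  have "cr m (insert a R) (insert a R) = 2 * (\<Sum>v\<in>R. m a v) + cr m R R"
    using insert.hyps assms(2,3) by (simp add: cr_def sum.distrib)
  then show ?case using insert.IH by simp
qed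

lemma deg_sum: "(\<Sum>v\<in>A. deg V m v) = cr m A V" by (simp add: deg_def cr_def)

lemma tval_le: assumes "2 \<le> card R" "cr m R R \<le> c * (card R - 1)" shows "tval m R \<le> real c"
proof -
  have pos: "real (card R) - 1 > 0" using assms(1) by linarith
  have "2 * edges_in m R \<le> cr m R R" by (simp add: edges_in_def cr_def)
  then have "2 * edges_in m R \<le> c * (card R - 1)" using assms(2) by linarith
  then have "real (2 * edges_in m R) \<le> real (c * (card R - 1))" by linarith
  then have "2 * real (edges_in m R) \<le> real c * (real (card R) - 1)"
    using assms(1) by (simp add: of_nat_diff)
  then show ?thesis unfolding tval_def using pos by (simp add: divide_le_eq)
qed

lemma tval_ge_imp: assumes "2 \<le> card R" "even (cr m R R)" "tval m R \<le> real c"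
  shows "cr m R R \<le> c * (card R - 1)"
proof -
  have pos: "real (card R) - 1 > 0" using assms(1) by linarith
  have e: "2 * edges_in m R = cr m R R" using assms(2) by (simp add: edges_in_def cr_def)
  have "2 * real (edges_in m R) \<le> real c * (real (card R) - 1)"
    using assms(3) pos unfolding tval_def by (simp add: divide_le_eq)
  then have "real (2 * edges_in m R) \<le> real (c * (card R - 1))"
    using assms(1) by (simp add: of_nat_diff)
  then show ?thesis using e by linarith
qed

lemma tval_eq_imp: assumes "2 \<le> card R" "tval m R = real c"
  shows "c * (card R - 1) \<le> cr m R R"
proof -
  have pos: "real (card R) - 1 > 0" using assms(1) by linarith
  have e: "2 * edges_in m R \<le> cr m R R" by (simp add: edges_in_def cr_def)
  have "2 * real (edges_in m R) = real c * (real (card R) - 1)"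
    using assms(2) pos unfolding tval_def by (simp add: divide_eq_eq)
  then have "real (2 * edges_in m R) = real (c * (card R - 1))"
    using assms(1) by (simp add: of_nat_diff)
  then show ?thesis using e by linarith
qed

lemma Gamma_fin: "finite V \<Longrightarrow> finite {tval m R | R. R \<subseteq> V \<and> odd (card R) \<and> 3 \<le> card R}"
  by (rule finite_subset[of _ "tval m ` Pow V"]) auto

lemma Gamma_ge: "finite V \<Longrightarrow> R \<subseteq> V \<Longrightarrow> odd (card R) \<Longrightarrow> 3 \<le> card R \<Longrightarrow> tval m R \<le> Gamma V m"
  unfolding Gamma_def by (rule Max_ge) (auto simp: Gamma_fin)

lemma Gamma_le: "finite V \<Longrightarrow> 0 \<le> c \<Longrightarrow> (\<And>R. R \<subseteq> V \<Longrightarrow> odd (card R) \<Longrightarrow> 3 \<le> card R \<Longrightarrow> tval m R \<le> c) \<Longrightarrow> Gamma V m \<le> c"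
  unfolding Gamma_def by (subst Max_le_iff) (auto simp: Gamma_fin)

lemma maxdeg_ge: "finite V \<Longrightarrow> v \<in> V \<Longrightarrow> deg V m v \<le> maxdeg V m"
  unfolding maxdeg_def by (rule Max_ge) auto

lemma maxdeg_le: "finite V \<Longrightarrow> V \<noteq> {} \<Longrightarrow> (\<forall>v\<in>V. deg V m v \<le> c) \<Longrightarrow> maxdeg V m \<le> c"
  unfolding maxdeg_def by (subst Max_le_iff) auto

lemma shrink_V_ins: "shrink_V V T = insert None (Some ` (V - T))"
  by (auto simp: shrink_V_def)

lemma shrink_cr_some: assumes "R \<subseteq> V - T"
  shows "cr (shrink_m V m T) (Some`R) (Some`R) = cr m R R"
proof -
  have "cr (shrink_m V m T) (Some`R) (Some`R) = (\<Sum>u\<in>R. \<Sum>v\<in>R. shrink_m V m T (Some u) (Some v))"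
    by (simp add: cr_def sum.reindex inj_on_def)
  also have "\<dots> = cr m R R" unfolding cr_def using assms by (intro sum.cong refl) auto
  finally show ?thesis .
qed

lemma shrink_cr_none: assumes "R \<subseteq> V - T" "finite R"
  shows "cr (shrink_m V m T) (insert None (Some`R)) (insert None (Some`R)) = cr m R R + 2 * cr m R T"
proof -
  let ?m = "shrink_m V m T"
  have fin: "finite (Some`R)" using assms by simp
  have nn: "None \<notin> Some`R" by auto
  have a: "(\<Sum>x\<in>Some`R. ?m None x) = cr m R T"
  proof -
    have "(\<Sum>x\<in>Some`R. ?m None x) = (\<Sum>v\<in>R. ?m None (Some v))" by (simp add: sum.reindex inj_on_def)
    also have "\<dots> = cr m R T" unfolding cr_def using assms by (intro sum.cong refl) auto
    finally show ?thesis .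
  qed
  have b: "(\<Sum>x\<in>Some`R. ?m x None) = cr m R T"
  proof -
    have "(\<Sum>x\<in>Some`R. ?m x None) = (\<Sum>v\<in>R. ?m (Some v) None)" by (simp add: sum.reindex inj_on_def)
    also have "\<dots> = cr m R T" unfolding cr_def using assms by (intro sum.cong refl) auto
    finally show ?thesis .
  qed
  have "cr ?m (insert None (Some`R)) (insert None (Some`R)) = ?m None None + (\<Sum>x\<in>Some`R. ?m None x) + (\<Sum>x\<in>Some`R. ?m x None) + cr ?m (Some`R) (Some`R)"
    unfolding cr_def using fin nn by (simp add: sum.distrib)
  then show ?thesis using a b shrink_cr_some[OF assms(1)] by simp
qed

lemma shrink_deg_some: assumes "T \<subseteq> V" "finite V" "v \<in> V - T"
  shows "deg (shrink_V V T) (shrink_m V m T) (Some v) = deg V m v"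
proof -
  let ?m = "shrink_m V m T"
  have "deg (shrink_V V T) ?m (Some v) = ?m (Some v) None + (\<Sum>x\<in>Some`(V-T). ?m (Some v) x)"
    unfolding deg_def shrink_V_ins using assms by (subst sum.insert) auto
  also have "(\<Sum>x\<in>Some`(V-T). ?m (Some v) x) = (\<Sum>u\<in>V-T. ?m (Some v) (Some u))"
    by (simp add: sum.reindex inj_on_def)
  also have "\<dots> = (\<Sum>u\<in>V-T. m v u)" using assms by (intro sum.cong refl) auto
  also have "?m (Some v) None = (\<Sum>u\<in>T. m v u)" using assms by simp
  also have "(\<Sum>u\<in>T. m v u) + (\<Sum>u\<in>V-T. m v u) = deg V m v"
    unfolding deg_def using assms by (simp add: sum.subset_diff[of T V])
  finally show ?thesis .
qed

lemma shrink_deg_none: assumes "T \<subseteq> V" "finite V"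
  shows "deg (shrink_V V T) (shrink_m V m T) None = cr m (V - T) T"
proof -
  let ?m = "shrink_m V m T"
  have "deg (shrink_V V T) ?m None = ?m None None + (\<Sum>x\<in>Some`(V-T). ?m None x)"
    unfolding deg_def shrink_V_ins using assms by (subst sum.insert) auto
  also have "(\<Sum>x\<in>Some`(V-T). ?m None x) = (\<Sum>u\<in>V-T. ?m None (Some u))"
    by (simp add: sum.reindex inj_on_def)
  also have "\<dots> = cr m (V - T) T" unfolding cr_def using assms by (intro sum.cong refl) auto
  finally show ?thesis by simp
qed

lemma shrink_card: "finite V \<Longrightarrow> card (shrink_V V T) = card (V - T) + 1"
  unfolding shrink_V_ins by (simp add: card_image inj_on_def image_iff)

lemma shrink_numdeg: assumes "T \<subseteq> V" "finite V"
  shows "num_deg (shrink_V V T) (shrink_m V m T) c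
    = card {v\<in>V-T. deg V m v = c} + (if cr m (V-T) T = c then 1 else 0)"
proof -
  let ?m = "shrink_m V m T"
  let ?A = "{v\<in>V-T. deg V m v = c}"
  have e: "{x \<in> shrink_V V T. deg (shrink_V V T) ?m x = c}
     = (if cr m (V-T) T = c then {None} else {}) \<union> Some ` ?A"
  proof (rule set_eqI)
    fix x show "x \<in> {x \<in> shrink_V V T. deg (shrink_V V T) ?m x = c}
     \<longleftrightarrow> x \<in> (if cr m (V-T) T = c then {None} else {}) \<union> Some ` ?A"
    proof (cases x)
      case None then show ?thesis using shrink_deg_none[OF assms] by (auto simp: shrink_V_ins)
    next
      case (Some a) then show ?thesis using shrink_deg_some[OF assms] by (auto simp: shrink_V_ins)
    qed
  qed
  have fA: "finite ?A" using assms by simp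
  show ?thesis unfolding num_deg_def e using fA
    by (simp add: card_image inj_on_def image_iff)
qed

lemma shrink_maxdeg: assumes "T \<subseteq> V" "finite V" "\<forall>v\<in>V. deg V m v \<le> c" "cr m (V-T) T \<le> c"
  shows "maxdeg (shrink_V V T) (shrink_m V m T) \<le> c"
proof (rule maxdeg_le)
  show "finite (shrink_V V T)" using assms by (simp add: shrink_V_ins)
  show "shrink_V V T \<noteq> {}" by (simp add: shrink_V_ins)
  show "\<forall>v\<in>shrink_V V T. deg (shrink_V V T) (shrink_m V m T) v \<le> c"
    using assms shrink_deg_none[OF assms(1,2)] shrink_deg_some[OF assms(1,2)]
    by (auto simp: shrink_V_ins)
qed

lemma shrink_Gamma: assumes "T \<subseteq> V" "finite V"
  and odd: "\<And>R. R \<subseteq> V - T \<Longrightarrow> odd (card R) \<Longrightarrow> 3 \<le> card R \<Longrightarrow> cr m R R \<le> c * (card R - 1)"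
  and ev: "\<And>R. R \<subseteq> V - T \<Longrightarrow> even (card R) \<Longrightarrow> cr m R R + 2 * cr m R T \<le> c * card R"
  shows "Gamma (shrink_V V T) (shrink_m V m T) \<le> real c"
proof (rule Gamma_le)
  show "finite (shrink_V V T)" using assms by (simp add: shrink_V_ins)
  show "0 \<le> real c" by simp
  fix R assume R: "R \<subseteq> shrink_V V T" "odd (card R)" "3 \<le> card R"
  define R' where "R' = Some -` R"
  have R'sub: "R' \<subseteq> V - T" using R(1) unfolding R'_def shrink_V_ins by auto
  have finR': "finite R'" using R'sub assms finite_subset by blast
  have cS: "card (Some ` R') = card R'" by (simp add: card_image inj_on_def)
  show "tval (shrink_m V m T) R \<le> real c"
  proof (cases "None \<in> R")
    case True
    have Req: "R = insert None (Some ` R')" using R(1) True unfolding R'_def shrink_V_ins by auto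
    have cR: "card R = card R' + 1" using Req finR' cS by (simp add: image_iff)
    have "even (card R')" using cR R(2) by simp
    then have "cr m R' R' + 2 * cr m R' T \<le> c * card R'" using ev R'sub by blast
    then show ?thesis using tval_le[of R "shrink_m V m T" c] Req shrink_cr_none[OF R'sub finR'] cR R(3)
      by simp
  next
    case False
    have Req: "R = Some ` R'" using R(1) False unfolding R'_def shrink_V_ins by auto
    have cR: "card R = card R'" using Req cS by simp
    have "cr m R' R' \<le> c * (card R' - 1)" using odd R'sub R cR by simp
    then show ?thesis using tval_le[of R "shrink_m V m T" c] Req shrink_cr_some[OF R'sub] cR R(3)
      by simp
  qed
qed

theorem mainTheorem7:
  fixes V :: "'a set" and m :: "'a \<Rightarrow> 'a \<Rightarrow> nat" and d :: nat and S :: "'a set"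
  assumes "multigraph V m"
    and "even (card V)"
    and "phi V m \<le> int d + 1"
    and "S \<subset> V" and "odd (card S)" and "3 \<le> card S"
    and "tval m S = real d + 1"
  shows "maxdeg (shrink_V V S) (shrink_m V m S) \<le> d + 1
    \<and> Gamma (shrink_V V S) (shrink_m V m S) \<le> real d + 1
    \<and> num_deg (shrink_V V S) (shrink_m V m S) (d + 1) \<le> num_deg V m (d + 1)
    \<and> maxdeg (shrink_V V (V - S)) (shrink_m V m (V - S)) \<le> d + 1
    \<and> Gamma (shrink_V V (V - S)) (shrink_m V m (V - S)) \<le> real d + 1
    \<and> (num_deg (shrink_V V (V - S)) (shrink_m V m (V - S)) (d + 1) > num_deg V m (d + 1)
       \<longrightarrow> card (shrink_V V (V - S)) = num_deg V m (d + 1) + 1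
         \<and> (\<forall>v \<in> shrink_V V (V - S). deg (shrink_V V (V - S)) (shrink_m V m (V - S)) v = d + 1))"
proof -
  from assms(1) have finV: "finite V" and sym: "\<forall>u v. m u v = m v u" and diag: "\<forall>u. m u u = 0"
    by (auto simp: multigraph_def)
  have SV: "S \<subseteq> V" using assms(4) by auto
  have finS: "finite S" using finV SV finite_subset by blast
  have finVS: "finite (V - S)" using finV by simp
  have mx: "max (real (maxdeg V m)) (Gamma V m) \<le> real d + 1"
  proof -
    have "\<lceil>max (real (maxdeg V m)) (Gamma V m)\<rceil> \<le> int d + 1" using assms(3) by (simp only: phi_def)
    then have "max (real (maxdeg V m)) (Gamma V m) \<le> of_int (int d + 1)" by (simp only: ceiling_le_iff)
    then show ?thesis by simp
  qed
  have degle: "\<forall>v\<in>V. deg V m v \<le> d + 1"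
  proof
    fix v assume "v \<in> V"
    then have "deg V m v \<le> maxdeg V m" by (rule maxdeg_ge[OF finV])
    moreover have "real (maxdeg V m) \<le> real d + 1" using mx by (simp only: max.bounded_iff)
    ultimately show "deg V m v \<le> d + 1" by linarith
  qed
  have oddb: "cr m R R \<le> (d+1) * (card R - 1)" if R: "R \<subseteq> V" "odd (card R)" for R
  proof -
    have finR: "finite R" using R finV finite_subset by blast
    show ?thesis
    proof (cases "card R = 1")
      case True then obtain a where "R = {a}" by (auto simp: card_1_singleton_iff)
      then show ?thesis using diag by (simp add: cr_def)
    next
      case False
      have "card R \<noteq> 0" using odd_pos[OF R(2)] by simp
      then have c3: "3 \<le> card R" using False R(2) by presburger
      then have "tval m R \<le> real d + 1" using Gamma_ge[OF finV R(1) R(2) c3, of m] mx by (simp only: max.bounded_iff) linarith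
      then show ?thesis using tval_ge_imp[of R m "d+1"] cr_even[OF finR sym diag] c3 by simp
    qed
  qed
  have k1: "1 \<le> card S" using assms(6) by simp
  have hS: "(d+1) * (card S - 1) \<le> cr m S S" using tval_eq_imp[of S m "d+1"] assms(6,7) by simp
  define b where "b = cr m S (V - S)"
  have VU: "V = S \<union> (V - S)" using SV by auto
  have degS: "cr m S V = cr m S S + b"
    unfolding b_def by (subst VU) (rule cr_Un_right[OF finS finVS], auto)
  have sumS: "cr m S V \<le> (d+1) * card S"
  proof -
    have "cr m S V = (\<Sum>v\<in>S. deg V m v)" by (simp add: deg_sum)
    also have "\<dots> \<le> (\<Sum>v\<in>S. d + 1)" using degle SV by (intro sum_mono) auto
    finally show ?thesis by (simp add: mult.commute)
  qed
  have keq: "(d+1) * card S = (d+1) * (card S - 1) + (d+1)" using k1 by (cases "card S") auto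
  have ble: "b \<le> d + 1" using degS sumS keq hS by linarith
  have beq: "\<forall>v\<in>S. deg V m v = d + 1" if "b = d + 1"
  proof (rule ccontr)
    assume "\<not> (\<forall>v\<in>S. deg V m v = d + 1)"
    then obtain v where v: "v \<in> S" "deg V m v \<noteq> d + 1" by blast
    then have "deg V m v < d + 1" using degle SV by force
    then have "(\<Sum>v\<in>S. deg V m v) < (\<Sum>v\<in>S. d + 1)"
      using degle SV finS v(1) by (intro sum_strict_mono_ex1) auto
    then have "cr m S V < (d+1) * card S" by (simp add: deg_sum mult.commute)
    then show False using degS that keq hS by linarith
  qed
  have bsym: "cr m (V - S) S = b" unfolding b_def using sym by (rule cr_swap)
  have VVS: "V - (V - S) = S" using SV by auto
  let ?r = "num_deg V m (d + 1)"
  have rdef: "?r = card {v\<in>V. deg V m v = d + 1}" by (simp add: num_deg_def)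

  have P1: "maxdeg (shrink_V V S) (shrink_m V m S) \<le> d + 1"
    using shrink_maxdeg[OF SV finV degle] bsym ble by simp
  have P2: "Gamma (shrink_V V S) (shrink_m V m S) \<le> real d + 1"
  proof -
    have "Gamma (shrink_V V S) (shrink_m V m S) \<le> real (d + 1)"
    proof (rule shrink_Gamma[OF SV finV])
      fix R assume R: "R \<subseteq> V - S" "odd (card R)" "3 \<le> card R"
      then show "cr m R R \<le> (d+1) * (card R - 1)" by (intro oddb) auto
    next
      fix R assume R: "R \<subseteq> V - S" "even (card R)"
      have finR: "finite R" using R finVS finite_subset by blast
      have dis: "R \<inter> S = {}" using R by auto
      have cU: "card (R \<union> S) = card R + card S" using card_Un_disjoint[OF finR finS dis] .
      have "odd (card (R \<union> S))" using cU R(2) assms(5) by simp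
      then have u: "cr m (R \<union> S) (R \<union> S) \<le> (d+1) * (card R + card S - 1)"
        using oddb[of "R \<union> S"] R SV cU by auto
      have "cr m (R \<union> S) (R \<union> S) = cr m R R + cr m R S + (cr m S R + cr m S S)"
        using finR finS dis by (simp add: cr_Un_left cr_Un_right)
      moreover have "cr m S R = cr m R S" using sym by (rule cr_swap)
      moreover have "(d+1) * (card R + card S - 1) = (d+1) * card R + (d+1) * (card S - 1)"
      proof -
        have "card R + card S - 1 = card R + (card S - 1)" using k1 by simp
        then show ?thesis by (simp only: add_mult_distrib2)
      qed
      ultimately show "cr m R R + 2 * cr m R S \<le> (d+1) * card R" using u hS by linarith
    qed
    then show ?thesis by simp
  qed
  have P3: "num_deg (shrink_V V S) (shrink_m V m S) (d + 1) \<le> ?r"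
  proof -
    let ?A = "{v\<in>V-S. deg V m v = d + 1}"
    have fB: "finite {v\<in>V. deg V m v = d + 1}" using finV by simp
    have n: "num_deg (shrink_V V S) (shrink_m V m S) (d + 1) = card ?A + (if b = d + 1 then 1 else 0)"
      using shrink_numdeg[OF SV finV] bsym by simp
    show ?thesis
    proof (cases "b = d + 1")
      case True
      have sub: "?A \<union> S \<subseteq> {v\<in>V. deg V m v = d + 1}" using beq[OF True] SV by auto
      have "card (?A \<union> S) = card ?A + card S"
        by (rule card_Un_disjoint) (use finVS finS in auto)
      then have "card ?A + card S \<le> ?r" using card_mono[OF fB sub] rdef by simp
      then show ?thesis using n True k1 by simp
    next
      case False
      have "card ?A \<le> ?r" unfolding rdef by (rule card_mono[OF fB]) auto
      then show ?thesis using n False by simp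
    qed
  qed
  have VSV: "V - S \<subseteq> V" by auto
  have P4: "maxdeg (shrink_V V (V - S)) (shrink_m V m (V - S)) \<le> d + 1"
    using shrink_maxdeg[OF VSV finV degle] VVS ble unfolding b_def by simp
  have P5: "Gamma (shrink_V V (V - S)) (shrink_m V m (V - S)) \<le> real d + 1"
  proof -
    have "Gamma (shrink_V V (V - S)) (shrink_m V m (V - S)) \<le> real (d + 1)"
    proof (rule shrink_Gamma[OF VSV finV])
      fix R assume R: "R \<subseteq> V - (V - S)" "odd (card R)" "3 \<le> card R"
      then show "cr m R R \<le> (d+1) * (card R - 1)" by (intro oddb) auto
    next
      fix R assume R0: "R \<subseteq> V - (V - S)" "even (card R)"
      have RS: "R \<subseteq> S" using R0 VVS by simp
      have finR: "finite R" using RS finS finite_subset by blast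
      define Q where "Q = S - R"
      have finQ: "finite Q" using finS Q_def by simp
      have cQ: "card Q = card S - card R" unfolding Q_def using card_Diff_subset[OF finR RS] .
      have cRS: "card R \<le> card S" using card_mono[OF finS RS] .
      have oQ: "odd (card Q)" using cQ cRS R0(2) assms(5) by auto
      have q: "cr m Q Q \<le> (d+1) * (card Q - 1)" using oddb[of Q] oQ SV Q_def by auto
      have SRQ: "S = R \<union> Q" using RS Q_def by auto
      have disRQ: "R \<inter> Q = {}" using Q_def by auto
      have "cr m S S = cr m R R + cr m R Q + (cr m Q R + cr m Q Q)"
        unfolding SRQ using finR finQ disRQ by (simp add: cr_Un_left cr_Un_right)
      moreover have "cr m Q R = cr m R Q" using sym by (rule cr_swap)
      moreover have VRQ: "V = R \<union> (Q \<union> (V - S))" using SV RS Q_def by auto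
      have e1: "cr m R V = cr m R R + cr m R (Q \<union> (V - S))"
        by (subst VRQ) (rule cr_Un_right, use finR finQ finVS RS Q_def in auto)
      have e2: "cr m R (Q \<union> (V - S)) = cr m R Q + cr m R (V - S)"
        by (rule cr_Un_right) (use finQ finVS Q_def in auto)
      have "cr m R V = cr m R R + (cr m R Q + cr m R (V - S))" using e1 e2 by simp
      moreover have "cr m R V \<le> (d+1) * card R"
      proof -
        have "cr m R V = (\<Sum>v\<in>R. deg V m v)" by (simp add: deg_sum)
        also have "\<dots> \<le> (\<Sum>v\<in>R. d + 1)" using degle SV RS by (intro sum_mono) auto
        finally show ?thesis by (simp add: mult.commute)
      qed
      moreover have "(d+1) * (card S - 1) = (d+1) * card R + (d+1) * (card Q - 1)"
      proof -
        have "card S - 1 = card R + (card Q - 1)" using cQ cRS oQ by (cases "card Q") auto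
        then show ?thesis by (simp only: add_mult_distrib2)
      qed
      ultimately show "cr m R R + 2 * cr m R (V - S) \<le> (d+1) * card R" using q hS by linarith
    qed
    then show ?thesis by simp
  qed
  have P6: "num_deg (shrink_V V (V - S)) (shrink_m V m (V - S)) (d + 1) > ?r
       \<longrightarrow> card (shrink_V V (V - S)) = ?r + 1
         \<and> (\<forall>v \<in> shrink_V V (V - S). deg (shrink_V V (V - S)) (shrink_m V m (V - S)) v = d + 1)"
  proof
    assume gt: "num_deg (shrink_V V (V - S)) (shrink_m V m (V - S)) (d + 1) > ?r"
    let ?A = "{v\<in>S. deg V m v = d + 1}"
    have fB: "finite {v\<in>V. deg V m v = d + 1}" using finV by simp
    have n: "num_deg (shrink_V V (V - S)) (shrink_m V m (V - S)) (d + 1) = card ?A + (if b = d + 1 then 1 else 0)"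
      using shrink_numdeg[OF VSV finV] VVS unfolding b_def by simp
    have Ar: "card ?A \<le> ?r" unfolding rdef by (rule card_mono[OF fB]) (use SV in auto)
    have bb: "b = d + 1" using gt n Ar by (cases "b = d + 1") auto
    have AS: "?A = S" using beq[OF bb] by auto
    have Sr: "card S \<le> ?r" using Ar AS by simp
    have rS: "?r = card S" using gt n bb AS Sr by simp
    show "card (shrink_V V (V - S)) = ?r + 1
         \<and> (\<forall>v \<in> shrink_V V (V - S). deg (shrink_V V (V - S)) (shrink_m V m (V - S)) v = d + 1)"
    proof
      show "card (shrink_V V (V - S)) = ?r + 1" using shrink_card[OF finV] VVS rS by simp
      show "\<forall>v \<in> shrink_V V (V - S). deg (shrink_V V (V - S)) (shrink_m V m (V - S)) v = d + 1"
        using shrink_deg_none[OF VSV finV] shrink_deg_some[OF VSV finV] VVS bb beq[OF bb]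
        unfolding b_def by (auto simp: shrink_V_ins)
    qed
  qed
  show ?thesis using P1 P2 P3 P4 P5 P6 by blast
qed
end
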